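(* Let $S$ be an entropy function for a finite set $X$, and let $A_1\subset\cdots\subset A_m$ and $B_1\subset\cdots\subset B_n$ be subsets of $X$ with $A_m\cap B_n=\emptyset$. Then there exists an EDF $f$ for $S$ such that: $\sum_{x\in A_i}f(x)=S(A_i)$ for all $i=1,\dots,m$; $\sum_{y\in B_j}f(y)=-S(B_j)$ for all $j=1,\dots,n$; $f(x)\ge0$ for all $x\in A_1$; and $f(y)\le 0$ for all $y\in B_1$.
   Context: An entropy function for a finite set $X$ is a function $S:2^X\to[0,\infty)$ with $S(\emptyset)=0$, $S(A)+S(B)\ge S(A\cap B)+S(A\cup B)$ and $S(A)+S(B)\ge S(A\setminus B)+S(B\setminus A)$ for all $A,B\subseteq X$. An entanglement distribution function (EDF) for $S$ is a function $f:X\to\mathbb R$ with $\big|\sum_{x\in A}f(x)\big|\le S(A)$ for all $A\subseteq X$. *)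

theory Defs
  imports "HOL-Analysis.Analysis"
begin

definition entropy_function :: "'a set \<Rightarrow> ('a set \<Rightarrow> real) \<Rightarrow> bool" where
  "entropy_function X S \<longleftrightarrow> finite X \<and>
     (\<forall>A. A \<subseteq> X \<longrightarrow> S A \<ge> 0) \<and> S {} = 0 \<and>
     (\<forall>A B. A \<subseteq> X \<longrightarrow> B \<subseteq> X \<longrightarrow> S A + S B \<ge> S (A \<inter> B) + S (A \<union> B)) \<and>
     (\<forall>A B. A \<subseteq> X \<longrightarrow> B \<subseteq> X \<longrightarrow> S A + S B \<ge> S (A - B) + S (B - A))"

definition is_EDF :: "'a set \<Rightarrow> ('a set \<Rightarrow> real) \<Rightarrow> ('a \<Rightarrow> real) \<Rightarrow> bool" where
  "is_EDF X S f \<longleftrightarrow> (\<forall>A. A \<subseteq> X \<longrightarrow> \<bar>\<Sum>x\<in>A. f x\<bar> \<le> S A)"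

end

theory Submission
  imports Defs
begin

lemma greedy_exists:
  fixes R :: "'a set \<Rightarrow> real"
  assumes "finite W"
    and sub: "\<forall>U V. U \<subseteq> W \<longrightarrow> V \<subseteq> W \<longrightarrow> R U + R V \<ge> R (U \<inter> V) + R (U \<union> V)"
    and R0: "R {} = 0"
    and "K \<subseteq> Pow W"
    and "\<forall>C\<in>K. \<forall>D\<in>K. C \<subseteq> D \<or> D \<subseteq> C"
  shows "\<exists>f. (\<forall>D. D \<subseteq> W \<longrightarrow> sum f D \<le> R D) \<and> sum f W = R W \<and> (\<forall>C\<in>K. sum f C = R C)"
  using assms(1,2,4,5)
proof (induction W arbitrary: K rule: finite_psubset_induct)
  case (psubset W)
  show ?case
  proof (cases "W = {}")
    case True
    have "\<forall>C\<in>K. C = {}" using True psubset.prems(2) by auto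
    then show ?thesis using True R0 by (rule_tac x="\<lambda>_. 0" in exI) auto
  next
    case False
    define P where "P = {C\<in>K. C \<noteq> W}"
    have "P \<subseteq> Pow W" using psubset.prems(2) unfolding P_def by auto
    then have finP: "finite P" using psubset.hyps(1) by (metis finite_Pow_iff finite_subset)
    have PW: "\<forall>C\<in>P. C \<subset> W" using psubset.prems(2) unfolding P_def by auto
    obtain U where UW: "U \<subset> W" and PU: "\<forall>C\<in>P. C \<subseteq> U"
    proof (cases "P = {}")
      case True
      then show ?thesis using that False by auto
    next
      case False
      have "Max (card ` P) \<in> card ` P" using finP False by (intro Max_in) auto
      then obtain C' where C'P: "C' \<in> P" and C'e: "card C' = Max (card ` P)" by auto
      have C'max: "\<forall>C\<in>P. card C \<le> card C'" using finP C'e by simp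
      have "\<forall>C\<in>P. C \<subseteq> C'"
      proof
        fix C assume CP: "C \<in> P"
        have "C \<subseteq> C' \<or> C' \<subseteq> C" using psubset.prems(3) CP C'P unfolding P_def by auto
        moreover have "finite C" using CP PW psubset.hyps(1) finite_subset by blast
        moreover have "card C \<le> card C'" using C'max CP by blast
        ultimately show "C \<subseteq> C'" using card_seteq by blast
      qed
      moreover have "C' \<subset> W" using C'P PW by blast
      ultimately show ?thesis using that[of C'] by blast
    qed
    obtain x where xW: "x \<in> W" and xU: "x \<notin> U" using UW by auto
    define W' where "W' = W - {x}"
    have W'W: "W' \<subset> W" using xW W'_def by auto
    have sub': "\<forall>U V. U \<subseteq> W' \<longrightarrow> V \<subseteq> W' \<longrightarrow> R U + R V \<ge> R (U \<inter> V) + R (U \<union> V)"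
      using psubset.prems(1) W'W by (meson order.trans psubset_imp_subset)
    have PW': "P \<subseteq> Pow W'" using PU xU UW PW unfolding W'_def by blast
    have chP: "\<forall>C\<in>P. \<forall>D\<in>P. C \<subseteq> D \<or> D \<subseteq> C" using psubset.prems(3) unfolding P_def by auto
    obtain f' where f'1: "\<forall>D. D \<subseteq> W' \<longrightarrow> sum f' D \<le> R D" and f'2: "sum f' W' = R W'"
      and f'3: "\<forall>C\<in>P. sum f' C = R C"
      using psubset.IH[OF W'W sub' PW' chP] by blast
    define f where "f = f'(x := R W - R W')"
    have offx: "sum f D = sum f' D" if "x \<notin> D" for D
      unfolding f_def using that by (intro sum.cong) auto
    have finW: "finite W" by fact
    have onx: "sum f D = R W - R W' + sum f' (D - {x})" if "x \<in> D" "D \<subseteq> W" for D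
    proof -
      have "finite D" using that finW finite_subset by blast
      then have "sum f D = f x + sum f (D - {x})" using that(1) by (simp add: sum.remove)
      also have "sum f (D - {x}) = sum f' (D - {x})" by (rule offx) auto
      finally show ?thesis unfolding f_def by simp
    qed
    have A: "\<forall>D. D \<subseteq> W \<longrightarrow> sum f D \<le> R D"
    proof (intro allI impI)
      fix D assume DW: "D \<subseteq> W"
      show "sum f D \<le> R D"
      proof (cases "x \<in> D")
        case True
        have W'sub: "W' \<subseteq> W" using W'W by blast
        have "R D + R W' \<ge> R (D \<inter> W') + R (D \<union> W')" by (rule psubset.prems(1)[rule_format, OF DW W'sub])
        moreover have "D \<inter> W' = D - {x}" "D \<union> W' = W" using DW True xW unfolding W'_def by blast+
        moreover have "sum f' (D - {x}) \<le> R (D - {x})" using f'1 DW unfolding W'_def by blast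
        ultimately have "R (D - {x}) + R W \<le> R D + R W'" "sum f' (D - {x}) \<le> R (D - {x})" by simp_all
        then show ?thesis using onx[OF True DW] by linarith
      next
        case False
        have "D \<subseteq> W'" using DW False W'_def by blast
        then show ?thesis using offx[OF False] f'1 by simp
      qed
    qed
    have B: "sum f W = R W" using onx[OF xW] f'2 W'_def by simp
    have C: "\<forall>C\<in>K. sum f C = R C"
    proof
      fix C assume CK: "C \<in> K"
      show "sum f C = R C"
      proof (cases "C = W")
        case True then show ?thesis using B by simp
      next
        case False
        then have "C \<in> P" using CK P_def by auto
        moreover have "x \<notin> C" using \<open>C \<in> P\<close> PU xU by blast
        ultimately show ?thesis using offx f'3 by simp
      qed
    qed
    show ?thesis using A B C by blast
  qed
qed


definition mhull :: "('a set \<Rightarrow> real) \<Rightarrow> 'a set \<Rightarrow> 'a set \<Rightarrow> real" where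
  "mhull S F D = Min ((\<lambda>E. S (D \<union> E)) ` Pow F)"

lemma mhull_le: "finite F \<Longrightarrow> E \<subseteq> F \<Longrightarrow> mhull S F D \<le> S (D \<union> E)"
  unfolding mhull_def by (intro Min_le) auto

lemma mhull_att: "finite F \<Longrightarrow> \<exists>E. E \<subseteq> F \<and> mhull S F D = S (D \<union> E)"
proof -
  assume "finite F"
  then have "mhull S F D \<in> (\<lambda>E. S (D \<union> E)) ` Pow F" unfolding mhull_def by (intro Min_in) auto
  then show ?thesis by auto
qed

lemma mhull_sup: "finite F \<Longrightarrow> F \<subseteq> D \<Longrightarrow> mhull S F D = S D"
proof -
  assume a: "finite F" "F \<subseteq> D"
  then obtain E where "E \<subseteq> F" "mhull S F D = S (D \<union> E)" using mhull_att by blast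
  moreover have "D \<union> E = D" using a \<open>E \<subseteq> F\<close> by blast
  ultimately show ?thesis by simp
qed

lemma mhull_0: "finite F \<Longrightarrow> S {} = 0 \<Longrightarrow> \<forall>E. E \<subseteq> F \<longrightarrow> S E \<ge> 0 \<Longrightarrow> mhull S F {} = 0"
proof -
  assume a: "finite F" "S {} = 0" "\<forall>E. E \<subseteq> F \<longrightarrow> S E \<ge> 0"
  obtain E where "E \<subseteq> F" "mhull S F {} = S ({} \<union> E)" using mhull_att a(1) by blast
  then have "mhull S F {} \<ge> 0" using a(3) by simp
  moreover have "mhull S F {} \<le> S ({} \<union> {})" using mhull_le[OF a(1)] by blast
  ultimately show ?thesis using a(2) by simp
qed

lemma mhull_submod:
  assumes "finite F" "F \<subseteq> X"
    and sub: "\<forall>A B. A \<subseteq> X \<longrightarrow> B \<subseteq> X \<longrightarrow> S A + S B \<ge> S (A \<inter> B) + S (A \<union> B)"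
    and "U \<subseteq> X" "V \<subseteq> X"
  shows "mhull S F U + mhull S F V \<ge> mhull S F (U \<inter> V) + mhull S F (U \<union> V)"
proof -
  obtain E1 where E1: "E1 \<subseteq> F" "mhull S F U = S (U \<union> E1)" using mhull_att assms(1) by blast
  obtain E2 where E2: "E2 \<subseteq> F" "mhull S F V = S (V \<union> E2)" using mhull_att assms(1) by blast
  have h: "S (U \<union> E1) + S (V \<union> E2) \<ge> S ((U \<union> E1) \<inter> (V \<union> E2)) + S ((U \<union> E1) \<union> (V \<union> E2))"
    using sub assms E1 E2 by (meson le_sup_iff order_trans)
  define E' where "E' = ((U \<union> E1) \<inter> (V \<union> E2)) - (U \<inter> V)"
  have "E' \<subseteq> F" using E1 E2 unfolding E'_def by blast
  moreover have "(U \<union> E1) \<inter> (V \<union> E2) = (U \<inter> V) \<union> E'" unfolding E'_def by blast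
  ultimately have 1: "mhull S F (U \<inter> V) \<le> S ((U \<union> E1) \<inter> (V \<union> E2))" using mhull_le[OF assms(1)] by metis
  have "E1 \<union> E2 \<subseteq> F" using E1 E2 by blast
  moreover have "(U \<union> E1) \<union> (V \<union> E2) = (U \<union> V) \<union> (E1 \<union> E2)" by blast
  ultimately have 2: "mhull S F (U \<union> V) \<le> S ((U \<union> E1) \<union> (V \<union> E2))" using mhull_le[OF assms(1)] by metis
  show ?thesis using h 1 2 E1 E2 by linarith
qed

lemma chain_mono:
  assumes "\<forall>i. 1 \<le> i \<and> i < m \<longrightarrow> A i \<subset> A (Suc i)" "1 \<le> i" "i \<le> j" "j \<le> m"
  shows "A i \<subseteq> A j"
  using assms(3,4)
proof (induction j)
  case 0 then show ?case by simp
next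
  case (Suc j)
  show ?case
  proof (cases "i = Suc j")
    case True then show ?thesis by simp
  next
    case False
    then have "i \<le> j" using Suc.prems by simp
    then have "A i \<subseteq> A j" using Suc by simp
    moreover have "A j \<subset> A (Suc j)" using assms(1) assms(2) \<open>i \<le> j\<close> Suc.prems by auto
    ultimately show ?thesis by blast
  qed
qed

theorem theorem19:
  fixes X :: "'a set" and S :: "'a set \<Rightarrow> real"
    and A B :: "nat \<Rightarrow> 'a set" and m n :: nat
  assumes "entropy_function X S"
    and "m \<ge> 1" and "n \<ge> 1"
    and "\<forall>i\<in>{1..m}. A i \<subseteq> X" and "\<forall>j\<in>{1..n}. B j \<subseteq> X"
    and "\<forall>i. 1 \<le> i \<and> i < m \<longrightarrow> A i \<subset> A (Suc i)"
    and "\<forall>j. 1 \<le> j \<and> j < n \<longrightarrow> B j \<subset> B (Suc j)"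
    and "A m \<inter> B n = {}"
  shows "\<exists>f :: 'a \<Rightarrow> real. is_EDF X S f \<and>
           (\<forall>i\<in>{1..m}. (\<Sum>x\<in>A i. f x) = S (A i)) \<and>
           (\<forall>j\<in>{1..n}. (\<Sum>y\<in>B j. f y) = - S (B j)) \<and>
           (\<forall>x\<in>A 1. f x \<ge> 0) \<and>
           (\<forall>y\<in>B 1. f y \<le> 0)"
proof -
  have finX: "finite X" and nn: "\<forall>A. A \<subseteq> X \<longrightarrow> S A \<ge> 0" and S0: "S {} = 0"
    and sm: "\<forall>A B. A \<subseteq> X \<longrightarrow> B \<subseteq> X \<longrightarrow> S A + S B \<ge> S (A \<inter> B) + S (A \<union> B)"
    and wm: "\<forall>A B. A \<subseteq> X \<longrightarrow> B \<subseteq> X \<longrightarrow> S A + S B \<ge> S (A - B) + S (B - A)"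
    using assms(1) unfolding entropy_function_def by auto
  have Am: "\<forall>i\<in>{1..m}. A i \<subseteq> A m" using chain_mono[OF assms(6)] by auto
  have A1: "\<forall>i\<in>{1..m}. A 1 \<subseteq> A i" using chain_mono[OF assms(6)] by auto
  have Bn: "\<forall>j\<in>{1..n}. B j \<subseteq> B n" using chain_mono[OF assms(7)] by auto
  have B1: "\<forall>j\<in>{1..n}. B 1 \<subseteq> B j" using chain_mono[OF assms(7)] by auto
  have m1: "1 \<in> {1..m}" "m \<in> {1..m}" using assms(2) by auto
  have n1: "1 \<in> {1..n}" "n \<in> {1..n}" using assms(3) by auto
  have AmX: "A m \<subseteq> X" using assms(4) m1 by blast
  have BnX: "B n \<subseteq> X" using assms(5) n1 by blast
  have A1X: "A 1 \<subseteq> X" using assms(4) m1 by blast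
  have B1X: "B 1 \<subseteq> X" using assms(5) n1 by blast
  have finA1: "finite (A 1)" using A1X finX finite_subset by blast
  have finB1: "finite (B 1)" using B1X finX finite_subset by blast
  define W where "W = X - B n"
  have WX: "W \<subseteq> X" unfolding W_def by blast
  have AW: "\<forall>i\<in>{1..m}. A i \<subseteq> W" using Am AmX assms(8) unfolding W_def by blast
  have A1W: "A 1 \<subseteq> W" using AW m1 by blast
  have B1Bn: "B 1 \<subseteq> B n" using Bn n1 by blast
  define RA where "RA = mhull S (A 1)"
  define RB where "RB = mhull S (B 1)"
  have RAle: "RA D \<le> S D" for D using mhull_le[OF finA1, of "{}" S D] unfolding RA_def by simp
  have RBle: "RB D \<le> S D" for D using mhull_le[OF finB1, of "{}" S D] unfolding RB_def by simp
  have RAs: "RA D = S D" if "A 1 \<subseteq> D" for D using mhull_sup[OF finA1 that] unfolding RA_def by simp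
  have RBs: "RB D = S D" if "B 1 \<subseteq> D" for D using mhull_sup[OF finB1 that] unfolding RB_def by simp
  obtain fA where fA1: "\<forall>D. D \<subseteq> W \<longrightarrow> sum fA D \<le> RA D" and fA2: "sum fA W = RA W"
      and fA3: "\<forall>C\<in>A ` {1..m}. sum fA C = RA C"
  proof -
    have "\<exists>f. (\<forall>D. D \<subseteq> W \<longrightarrow> sum f D \<le> RA D) \<and> sum f W = RA W \<and> (\<forall>C\<in>A ` {1..m}. sum f C = RA C)"
    proof (rule greedy_exists)
      show "finite W" using finX WX finite_subset by blast
      show "\<forall>U V. U \<subseteq> W \<longrightarrow> V \<subseteq> W \<longrightarrow> RA (U \<inter> V) + RA (U \<union> V) \<le> RA U + RA V"
        using mhull_submod[OF finA1 A1X sm] WX unfolding RA_def by blast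
      show "RA {} = 0" unfolding RA_def using mhull_0[OF finA1, of S, OF S0] nn A1X by auto
      show "A ` {1..m} \<subseteq> Pow W" using AW by blast
      show "\<forall>C\<in>A ` {1..m}. \<forall>D\<in>A ` {1..m}. C \<subseteq> D \<or> D \<subseteq> C"
      proof (intro ballI)
        fix C D assume "C \<in> A ` {1..m}" "D \<in> A ` {1..m}"
        then obtain i j where ij: "i \<in> {1..m}" "j \<in> {1..m}" "C = A i" "D = A j" by blast
        show "C \<subseteq> D \<or> D \<subseteq> C"
        proof (cases "i \<le> j")
          case True then show ?thesis using chain_mono[OF assms(6)] ij by auto
        next
          case False then show ?thesis using chain_mono[OF assms(6)] ij by auto
        qed
      qed
    qed
    then show ?thesis using that by blast
  qed
  obtain fB where fB1: "\<forall>D. D \<subseteq> B n \<longrightarrow> sum fB D \<le> RB D" and fB2: "sum fB (B n) = RB (B n)"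
      and fB3: "\<forall>C\<in>B ` {1..n}. sum fB C = RB C"
  proof -
    have "\<exists>f. (\<forall>D. D \<subseteq> B n \<longrightarrow> sum f D \<le> RB D) \<and> sum f (B n) = RB (B n) \<and> (\<forall>C\<in>B ` {1..n}. sum f C = RB C)"
    proof (rule greedy_exists)
      show "finite (B n)" using finX BnX finite_subset by blast
      show "\<forall>U V. U \<subseteq> B n \<longrightarrow> V \<subseteq> B n \<longrightarrow> RB (U \<inter> V) + RB (U \<union> V) \<le> RB U + RB V"
        using mhull_submod[OF finB1 B1X sm] BnX unfolding RB_def by blast
      show "RB {} = 0" unfolding RB_def using mhull_0[OF finB1, of S, OF S0] nn B1X by auto
      show "B ` {1..n} \<subseteq> Pow (B n)" using Bn by blast
      show "\<forall>C\<in>B ` {1..n}. \<forall>D\<in>B ` {1..n}. C \<subseteq> D \<or> D \<subseteq> C"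
      proof (intro ballI)
        fix C D assume "C \<in> B ` {1..n}" "D \<in> B ` {1..n}"
        then obtain i j where ij: "i \<in> {1..n}" "j \<in> {1..n}" "C = B i" "D = B j" by blast
        show "C \<subseteq> D \<or> D \<subseteq> C"
        proof (cases "i \<le> j")
          case True then show ?thesis using chain_mono[OF assms(7)] ij by auto
        next
          case False then show ?thesis using chain_mono[OF assms(7)] ij by auto
        qed
      qed
    qed
    then show ?thesis using that by blast
  qed
  define f where "f = (\<lambda>x. if x \<in> B n then - fB x else fA x)"
  have sumf: "sum f D = sum fA (D - B n) - sum fB (D \<inter> B n)" if "D \<subseteq> X" for D
  proof -
    have "finite D" using that finX finite_subset by blast
    then have "sum f D = sum f (D \<inter> B n) + sum f (D - B n)" by (rule sum.Int_Diff)
    moreover have "sum f (D \<inter> B n) = - sum fB (D \<inter> B n)"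
      unfolding f_def sum_negf[symmetric] by (rule sum.cong) auto
    moreover have "sum f (D - B n) = sum fA (D - B n)"
      unfolding f_def by (rule sum.cong) auto
    ultimately show ?thesis by simp
  qed
  have edf: "is_EDF X S f"
    unfolding is_EDF_def
  proof (intro allI impI)
    fix D assume DX: "D \<subseteq> X"
    define D1 where "D1 = D - B n"
    define D2 where "D2 = D \<inter> B n"
    have D1W: "D1 \<subseteq> W" unfolding D1_def W_def using DX by blast
    have D2B: "D2 \<subseteq> B n" unfolding D2_def by blast
    have finW: "finite W" using finX WX finite_subset by blast
    have finBn: "finite (B n)" using finX BnX finite_subset by blast
    have sD: "sum f D = sum fA D1 - sum fB D2" using sumf[OF DX] unfolding D1_def D2_def .
    have u1: "sum fA D1 \<le> S D1" using fA1[rule_format, OF D1W] RAle[of D1] by linarith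
    have "sum fB (B n) = sum fB D2 + sum fB (B n - D2)"
      using sum.subset_diff[OF D2B finBn, of fB] by linarith
    moreover have "sum fB (B n - D2) \<le> S (B n - D2)" using fB1[rule_format, of "B n - D2"] RBle[of "B n - D2"] by auto
    moreover have "sum fB (B n) = S (B n)" using fB2 RBs[OF B1Bn] by simp
    ultimately have u2: "sum fB D2 \<ge> S (B n) - S (B n - D2)" by linarith
    have "S D + S (B n) \<ge> S (D - B n) + S (B n - D)" using wm DX BnX by blast
    moreover have "D - B n = D1" "B n - D = B n - D2" unfolding D1_def D2_def by blast+
    ultimately have u3: "S D + S (B n) \<ge> S D1 + S (B n - D2)" by simp
    have l1: "sum fB D2 \<le> S D2" using fB1[rule_format, OF D2B] RBle[of D2] by linarith
    have "sum fA W = sum fA D1 + sum fA (W - D1)"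
      using sum.subset_diff[OF D1W finW, of fA] by linarith
    moreover have "sum fA (W - D1) \<le> S (W - D1)" using fA1[rule_format, of "W - D1"] RAle[of "W - D1"] by auto
    moreover have "sum fA W = S W" using fA2 RAs[OF A1W] by simp
    ultimately have l2: "sum fA D1 \<ge> S W - S (W - D1)" by linarith
    have "S D + S W \<ge> S (D - W) + S (W - D)" using wm DX WX by blast
    moreover have "D - W = D2" "W - D = W - D1" unfolding D1_def D2_def W_def using DX by blast+
    ultimately have l3: "S D + S W \<ge> S D2 + S (W - D1)" by simp
    show "\<bar>sum f D\<bar> \<le> S D" using sD u1 u2 u3 l1 l2 l3 by linarith
  qed
  have pA: "\<forall>i\<in>{1..m}. (\<Sum>x\<in>A i. f x) = S (A i)"
  proof
    fix i assume i: "i \<in> {1..m}"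
    have "A i \<subseteq> X" using assms(4) i by blast
    then have "sum f (A i) = sum fA (A i - B n) - sum fB (A i \<inter> B n)" by (rule sumf)
    moreover have "A i \<inter> B n = {}" "A i - B n = A i" using AW i unfolding W_def by blast+
    ultimately have "sum f (A i) = sum fA (A i)" by simp
    also have "\<dots> = RA (A i)" using fA3 i by blast
    also have "\<dots> = S (A i)" using RAs A1 i by blast
    finally show "(\<Sum>x\<in>A i. f x) = S (A i)" .
  qed
  have pB: "\<forall>j\<in>{1..n}. (\<Sum>y\<in>B j. f y) = - S (B j)"
  proof
    fix j assume j: "j \<in> {1..n}"
    have "B j \<subseteq> X" using assms(5) j by blast
    then have "sum f (B j) = sum fA (B j - B n) - sum fB (B j \<inter> B n)" by (rule sumf)
    moreover have "B j \<inter> B n = B j" "B j - B n = {}" using Bn j by blast+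
    ultimately have "sum f (B j) = - sum fB (B j)" by simp
    also have "sum fB (B j) = RB (B j)" using fB3 j by blast
    also have "\<dots> = S (B j)" using RBs B1 j by blast
    finally show "(\<Sum>y\<in>B j. f y) = - S (B j)" .
  qed
  have sA: "\<forall>x\<in>A 1. f x \<ge> 0"
  proof
    fix x assume x: "x \<in> A 1"
    have xB: "x \<notin> B n" using x A1W unfolding W_def by blast
    have "sum fA (A 1) = fA x + sum fA (A 1 - {x})" using finA1 x by (simp add: sum.remove)
    moreover have "sum fA (A 1) = S (A 1)" using fA3 m1 RAs[of "A 1"] by auto
    moreover have "sum fA (A 1 - {x}) \<le> RA (A 1 - {x})" using fA1[rule_format, of "A 1 - {x}"] A1W by auto
    moreover have "RA (A 1 - {x}) \<le> S ((A 1 - {x}) \<union> {x})" unfolding RA_def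
      using mhull_le[OF finA1, of "{x}" S "A 1 - {x}"] x by auto
    moreover have "(A 1 - {x}) \<union> {x} = A 1" using x by blast
    ultimately show "f x \<ge> 0" unfolding f_def using xB by simp
  qed
  have sB: "\<forall>y\<in>B 1. f y \<le> 0"
  proof
    fix x assume x: "x \<in> B 1"
    have xB: "x \<in> B n" using x B1Bn by blast
    have "sum fB (B 1) = fB x + sum fB (B 1 - {x})" using finB1 x by (simp add: sum.remove)
    moreover have "sum fB (B 1) = S (B 1)" using fB3 n1 RBs[of "B 1"] by auto
    moreover have "sum fB (B 1 - {x}) \<le> RB (B 1 - {x})" using fB1[rule_format, of "B 1 - {x}"] B1Bn by auto
    moreover have "RB (B 1 - {x}) \<le> S ((B 1 - {x}) \<union> {x})" unfolding RB_def
      using mhull_le[OF finB1, of "{x}" S "B 1 - {x}"] x by auto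
    moreover have "(B 1 - {x}) \<union> {x} = B 1" using x by blast
    ultimately show "f x \<le> 0" unfolding f_def using xB by simp
  qed
  show ?thesis using edf pA pB sA sB by blast
qed

end
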